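(* Let $k$ be a positive integer. Every $2^k$-$T_0T^\ast$-perfect number $n>1$ has the form $p_1^{2^{k+1}-1}$ for some prime $p_1$.
   Context: For a positive integer $m$, $T(m)$ denotes the product of all positive divisors of $m$, and $T^\ast(m)$ the product of all unitary divisors of $m$ (divisors $d$ with $\gcd(d,m/d)=1$). For an integer $K\ge 2$, an integer $n>1$ is called $K$-$T_0T^\ast$-perfect if $T(T^\ast(n))=n^K$. *)

theory Defs
  imports "HOL-Computational_Algebra.Primes"
begin

definition divisor_prod :: "nat \<Rightarrow> nat" where
  "divisor_prod m = (\<Prod>d\<in>{d. d dvd m}. d)"

definition unitary_divisor_prod :: "nat \<Rightarrow> nat" where
  "unitary_divisor_prod m = (\<Prod>d\<in>{d. d dvd m \<and> coprime d (m div d)}. d)"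

definition K_T0Tstar_perfect :: "nat \<Rightarrow> nat \<Rightarrow> bool" where
  "K_T0Tstar_perfect K n \<longleftrightarrow> n > 1 \<and> divisor_prod (unitary_divisor_prod n) = n ^ K"

end

theory Submission
  imports Defs
begin

lemma div_div_self_nat: "(d::nat) dvd m \<Longrightarrow> m > 0 \<Longrightarrow> m div (m div d) = d"
  by (metis div_div_eq_right dvd_refl div_self less_not_refl2 mult_1)

lemma prod_sq_closed:
  fixes m :: nat and S :: "nat set"
  assumes m: "m > 0" and sub: "\<And>d. d \<in> S \<Longrightarrow> d dvd m"
    and cl: "\<And>d. d \<in> S \<Longrightarrow> m div d \<in> S" and fin: "finite S"
  shows "(\<Prod>d\<in>S. d) ^ 2 = m ^ card S"
proof -
  have r: "(\<Prod>d\<in>S. m div d) = (\<Prod>d\<in>S. d)"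
    by (rule prod.reindex_bij_witness[where i="\<lambda>d. m div d" and j="\<lambda>d. m div d"])
       (auto simp: div_div_self_nat sub m cl)
  have "(\<Prod>d\<in>S. d) ^ 2 = (\<Prod>d\<in>S. d) * (\<Prod>d\<in>S. m div d)"
    by (simp add: r power2_eq_square)
  also have "\<dots> = (\<Prod>d\<in>S. d * (m div d))" by (simp add: prod.distrib)
  also have "\<dots> = (\<Prod>d\<in>S. m)" by (rule prod.cong) (auto dest: sub)
  also have "\<dots> = m ^ card S" by simp
  finally show ?thesis .
qed

lemma divisor_prod_sq: "m > 0 \<Longrightarrow> divisor_prod m ^ 2 = m ^ card {d. d dvd m}"
  unfolding divisor_prod_def
  by (rule prod_sq_closed) (auto simp: finite_divisors_nat)

lemma unitary_prod_sq:
  "n > 0 \<Longrightarrow> unitary_divisor_prod n ^ 2 = n ^ card {d. d dvd n \<and> coprime d (n div d)}"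
  unfolding unitary_divisor_prod_def
proof (rule prod_sq_closed)
  assume n: "n > 0"
  show "finite {d. d dvd n \<and> coprime d (n div d)}"
    using finite_divisors_nat[OF n] by (rule finite_subset[rotated]) auto
  fix d assume d: "d \<in> {d. d dvd n \<and> coprime d (n div d)}"
  then show "d dvd n" by auto
  show "n div d \<in> {d. d dvd n \<and> coprime d (n div d)}"
    using d n by (auto simp: div_div_self_nat coprime_commute)
qed

lemma square_odd_divisors:
  fixes r :: nat assumes r: "r > 0"
  shows "odd (card {d. d dvd r * r})"
proof -
  let ?m = "r * r"
  have m: "?m > 0" using r by simp
  let ?A = "{d. d dvd ?m \<and> d < r}" and ?B = "{d. d dvd ?m \<and> r < d}"
  have D: "{d. d dvd ?m} = ?A \<union> {r} \<union> ?B" by auto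
  have fin: "finite {d. d dvd ?m}" using finite_divisors_nat[OF m] .
  have fA: "finite ?A" by (rule finite_subset[OF _ fin]) auto
  have fB: "finite ?B" by (rule finite_subset[OF _ fin]) auto
  have key1: "r < ?m div d" if "d dvd ?m" "d < r" for d
  proof (rule ccontr)
    assume "\<not> r < ?m div d"
    hence "?m div d \<le> r" by simp
    moreover have "?m div d > 0" using that r
      by (metis dvd_div_eq_0_iff gr0I mult_eq_0_iff not_gr0)
    ultimately have "d * (?m div d) < r * (?m div d)"
      using mult_strict_right_mono[OF \<open>d < r\<close>] by blast
    also have "\<dots> \<le> r * r" using \<open>?m div d \<le> r\<close> by simp
    finally have "d * (?m div d) < r * r" .
    thus False using that by simp
  qed
  have key2: "?m div d < r" if "d dvd ?m" "r < d" for d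
  proof (rule ccontr)
    assume "\<not> ?m div d < r"
    hence "r \<le> ?m div d" by simp
    hence "r * r \<le> r * (?m div d)" by simp
    also have "\<dots> < d * (?m div d)"
      using mult_strict_right_mono[OF \<open>r < d\<close>] \<open>r \<le> ?m div d\<close> r by simp
    finally have "r * r < d * (?m div d)" .
    thus False using that by simp
  qed
  have dd: "?m div d dvd ?m" if "d dvd ?m" for d
    using that by (metis dvd_div_mult_self dvd_triv_left)
  have "bij_betw (\<lambda>d. ?m div d) ?A ?B"
  proof (rule bij_betw_byWitness[where f'="\<lambda>d. ?m div d"])
    show "\<forall>a\<in>?A. ?m div (?m div a) = a" using div_div_self_nat[OF _ m] by blast
    show "\<forall>a\<in>?B. ?m div (?m div a) = a" using div_div_self_nat[OF _ m] by blast
    show "(\<lambda>d. ?m div d) ` ?A \<subseteq> ?B"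
    proof
      fix x assume "x \<in> (\<lambda>d. ?m div d) ` ?A"
      then obtain d where "d \<in> ?A" "x = ?m div d" by blast
      thus "x \<in> ?B" using dd key1 by blast
    qed
    show "(\<lambda>d. ?m div d) ` ?B \<subseteq> ?A"
    proof
      fix x assume "x \<in> (\<lambda>d. ?m div d) ` ?B"
      then obtain d where "d \<in> ?B" "x = ?m div d" by blast
      thus "x \<in> ?A" using dd key2 by blast
    qed
  qed
  hence cAB: "card ?A = card ?B" by (rule bij_betw_same_card)
  have "card {d. d dvd ?m} = card ?A + 1 + card ?B"
    unfolding D using fA fB
    by (subst card_Un_disjoint, auto)+
  thus ?thesis using cAB by simp
qed

theorem mainTheorem10:
  fixes k n :: nat
  assumes "k \<ge> 1"
    and "n > 1"
    and "K_T0Tstar_perfect (2 ^ k) n"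
  shows "\<exists>p. prime p \<and> n = p ^ (2 ^ (k + 1) - 1)"
proof -
  define U where "U = {d. d dvd n \<and> coprime d (n div d)}"
  define u where "u = card U"
  define m where "m = unitary_divisor_prod n"
  define t where "t = card {d. d dvd m}"
  have n0: "n > 0" using assms(2) by simp
  have finU: "finite U" unfolding U_def
    using finite_divisors_nat[OF n0] by (rule finite_subset[rotated]) auto
  have sub1: "{1, n} \<subseteq> U" unfolding U_def using n0 by auto
  have u2: "u \<ge> 2" unfolding u_def using card_mono[OF finU sub1] assms(2) by simp
  have msq: "m ^ 2 = n ^ u" unfolding m_def u_def U_def using unitary_prod_sq n0 by simp
  have m0: "m > 0" using msq n0 by (metis gr0I power_not_zero zero_power2 zero_less_power)
  have tsq: "divisor_prod m ^ 2 = m ^ t" unfolding t_def using divisor_prod_sq m0 by simp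
  have T: "divisor_prod m = n ^ 2 ^ k" using assms(3) unfolding K_T0Tstar_perfect_def m_def by simp
  have "(m ^ 2) ^ t = (m ^ t) ^ 2" by (simp add: power_mult[symmetric] mult.commute)
  also have "\<dots> = ((n ^ 2 ^ k) ^ 2) ^ 2" using tsq T by simp
  finally have "(m ^ 2) ^ t = ((n ^ 2 ^ k) ^ 2) ^ 2" .
  hence "(n ^ u) ^ t = ((n ^ 2 ^ k) ^ 2) ^ 2" by (simp only: msq)
  hence "n ^ (u * t) = n ^ (2 ^ k * 2 * 2)" by (simp only: power_mult[symmetric])
  hence "u * t = 2 ^ k * 2 * 2" using power_inject_exp[OF assms(2)] by blast
  hence ut: "u * t = 2 ^ (k + 2)" by (simp add: power_add)
  have "u dvd 2 ^ (k + 2)" unfolding ut[symmetric] by simp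
  then obtain j where j: "u = 2 ^ j"
    using divides_primepow_nat[OF two_is_prime_nat] by blast
  have "t dvd 2 ^ (k + 2)" unfolding ut[symmetric] by simp
  then obtain i where i: "t = 2 ^ i"
    using divides_primepow_nat[OF two_is_prime_nat] by blast
  have j1: "j \<ge> 1" using u2 j by (cases j) auto
  have mn: "m = n ^ (2 ^ (j - 1))"
  proof -
    have e: "2 ^ j = 2 ^ (j - 1) * (2::nat)"
      using j1 by (metis Suc_pred' less_le_trans power_Suc2 zero_less_one)
    have "m ^ 2 = n ^ (2 ^ (j - 1) * 2)" using msq j e by simp
    also have "\<dots> = (n ^ (2 ^ (j - 1))) ^ 2" by (rule power_mult)
    finally have "m ^ 2 = (n ^ (2 ^ (j - 1))) ^ 2" .
    thus ?thesis by (rule power_eq_imp_eq_base) auto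
  qed
  show ?thesis
  proof (cases "j = 1")
    case False
    hence j2: "j \<ge> 2" using j1 by simp
    define w where "w = n ^ (2 ^ (j - 2))"
    have e2: "2 ^ (j - 1) = 2 ^ (j - 2) + (2::nat) ^ (j - 2)"
    proof -
      define l where "l = j - 2"
      have "j - 1 = Suc l" "j - 2 = l" using j2 unfolding l_def by auto
      thus ?thesis by simp
    qed
    have "m = w * w" unfolding mn w_def e2 by (rule power_add)
    moreover have "w > 0" unfolding w_def using n0 by simp
    ultimately have "odd t" unfolding t_def using square_odd_divisors by simp
    hence "t = 1" using i by (cases i) auto
    moreover have "m > 1" unfolding mn by (rule one_less_power[OF assms(2)]) simp
    hence s1: "{1, m} \<subseteq> {d. d dvd m}" and c2: "card {1, m} = 2" by auto
    have "t \<ge> 2" unfolding t_def using card_mono[OF finite_divisors_nat[OF m0] s1] c2 by linarith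
    ultimately show ?thesis by simp
  next
    case True
    hence u_2: "u = 2" using j by simp
    hence Ueq: "U = {1, n}"
      using card_subset_eq[OF finU sub1] assms(2) unfolding u_def by simp
    obtain p where p: "prime p" "p dvd n" using prime_factor_nat[of n] assms(2) by auto
    define a where "a = multiplicity p n"
    have a1: "a \<ge> 1" unfolding a_def using p n0
      by (simp add: Suc_le_eq prime_multiplicity_gt_zero_iff)
    have ndiv: "\<not> p dvd n div p ^ a" unfolding a_def
      using multiplicity_decompose[of n p] n0 p(1) prime_gt_1_nat[OF p(1)] by auto
    have pa: "p ^ a dvd n" unfolding a_def by (rule multiplicity_dvd)
    have "coprime (p ^ a) (n div p ^ a)"
      using ndiv p by (simp add: coprime_commute prime_imp_coprime coprime_power_left_iff)
    hence "p ^ a \<in> U" unfolding U_def using pa by simp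
    moreover have "p ^ a \<noteq> 1" using a1 prime_gt_1_nat[OF p(1)] by simp
    ultimately have nP: "n = p ^ a" using Ueq by auto
    have mm: "m = n" using mn True by simp
    have "{d. d dvd m} = (\<lambda>i. p ^ i) ` {..a}"
      unfolding mm nP using divides_primepow_nat[OF p(1)] by auto
    moreover have "inj_on (\<lambda>i. p ^ i) {..a}"
      using p prime_gt_1_nat by (auto simp: inj_on_def power_inject_exp)
    ultimately have "t = a + 1" unfolding t_def by (simp add: card_image)
    hence "a + 1 = 2 ^ (k + 1)" using ut u_2 by simp
    hence "a = 2 ^ (k + 1) - 1" by simp
    thus ?thesis using nP p by blast
  qed
qed

end
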